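(* Let $J:=\operatorname{conv}\{\mathbf{v}_0,\mathbf{v}_1,\dots,\mathbf{v}_d\}\subset\mathbb{R}^d_{\ge 0}\setminus\{\mathbf{0}\}$ be a $d$-simplex and let $f$ be continuous and convex on $J$. Then $$\operatorname{vol}(P(f,J))=\frac{1}{(d+2)!}\left|\det\begin{bmatrix}\mathbf{v}_0&\mathbf{v}_1&\dots&\mathbf{v}_d\\ 1&1&\dots&1\end{bmatrix}\right|\sum_{j=0}^d f(\mathbf{v}_j)-\frac{1}{d+2}\int_J f(\mathbf{x})\,d\mathbf{x}.$$
   Context: Let $\mu:\mathbb{R}^d\to\mathbb{R}$ be the unique affine function agreeing with $f$ at the vertices $\mathbf{v}_0,\dots,\mathbf{v}_d$ of $J$, and let $\mu(\mathbf{x},z):=z\,\mu(\mathbf{x}/z)$ (which extends to a linear function of $(\mathbf{x},z)$). For $z\ge 0$, $z\cdot J:=\{z\mathbf{x}:\mathbf{x}\in J\}$. The perspective relaxation is $$P(f,J):=\operatorname{cl}\{(\mathbf{x},y,z)\in\mathbb{R}^d\times\mathbb{R}\times\mathbb{R}:\ \mu(\mathbf{x},z)\ge y\ge z f(\mathbf{x}/z),\ \mathbf{x}\in z\cdot J,\ 1\ge z>0\}.$$ $\operatorname{vol}$ denotes $(d+2)$-dimensional Lebesgue measure. *)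

theory Defs
  imports "HOL-Analysis.Analysis"
begin

text \<open>The unique affine function agreeing with f at the vertices v j
  (j ranging over the d+1 indices of type 'n option).\<close>
definition affine_interp ::
  "('n::finite option \<Rightarrow> real^'n) \<Rightarrow> (real^'n \<Rightarrow> real) \<Rightarrow> real^'n \<Rightarrow> real" where
  "affine_interp v f = (THE g. (\<exists>a b. g = (\<lambda>x. a \<bullet> x + b)) \<and> (\<forall>j. g (v j) = f (v j)))"

definition persp_relax ::
  "('n::finite option \<Rightarrow> real^'n) \<Rightarrow> (real^'n \<Rightarrow> real) \<Rightarrow> ((real^'n) \<times> real \<times> real) set" where
  "persp_relax v f = closure {(x, y, z). 0 < z \<and> z \<le> 1 \<and>
      x \<in> (\<lambda>p. z *\<^sub>R p) ` (convex hull (range v)) \<and>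
      z * f ((1 / z) *\<^sub>R x) \<le> y \<and> y \<le> z * affine_interp v f ((1 / z) *\<^sub>R x)}"

definition vertex_matrix :: "('n::finite option \<Rightarrow> real^'n) \<Rightarrow> real^('n option)^('n option)" where
  "vertex_matrix v = (\<chi> i j. case i of None \<Rightarrow> 1 | Some k \<Rightarrow> v j $ k)"

end

theory Submission
  imports Defs
begin

lemma det_shear_gen:
  fixes m n :: "'n::finite"
  assumes "m \<noteq> n"
  shows "det (matrix (\<lambda>v::real^'n. \<chi> i. if i = m then v $ m + v $ n else v $ i)) = 1"
proof -
  have "matrix (\<lambda>v::real^'n. \<chi> i. if i = m then v $ m + v $ n else v $ i)
      = (\<chi> k. if k = m then row m (mat 1) + 1 *s row n (mat 1) else row k (mat 1))"
    by (auto simp: matrix_def vec_eq_iff row_def mat_def axis_def)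
  also have "det \<dots> = det (mat 1 :: real^'n^'n)"
    by (rule det_row_operation[OF assms])
  finally show ?thesis by simp
qed

proposition
 fixes f :: "real^'n::finite \<Rightarrow> real^'n::_"
  assumes "linear f" "S \<in> lmeasurable"
  shows measurable_linear_image_gen: "(f ` S) \<in> lmeasurable"
    and measure_linear_image_gen: "measure lebesgue (f ` S) = \<bar>det (matrix f)\<bar> * measure lebesgue S" (is "?Q f S")
proof -
  have "\<forall>S \<in> lmeasurable. (f ` S) \<in> lmeasurable \<and> ?Q f S"
  proof (rule induct_linear_elementary [OF \<open>linear f\<close>]; intro ballI)
    fix f g and S :: "(real,'n) vec set"
    assume "linear f" and "linear g"
      and f [rule_format]: "\<forall>S \<in> lmeasurable. f ` S \<in> lmeasurable \<and> ?Q f S"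
      and g [rule_format]: "\<forall>S \<in> lmeasurable. g ` S \<in> lmeasurable \<and> ?Q g S"
      and S: "S \<in> lmeasurable"
    then have gS: "g ` S \<in> lmeasurable"
      by blast
    show "(f \<circ> g) ` S \<in> lmeasurable \<and> ?Q (f \<circ> g) S"
      using f [OF gS] g [OF S] matrix_compose [OF \<open>linear g\<close> \<open>linear f\<close>]
      by (simp add: o_def image_comp abs_mult det_mul)
  next
    fix f :: "real^'n::_ \<Rightarrow> real^'n::_" and i and S :: "(real^'n::_) set"
    assume "linear f" and 0: "\<And>x. f x $ i = 0" and "S \<in> lmeasurable"
    then have "\<not> inj f"
      by (metis (full_types) linear_injective_imp_surjective one_neq_zero surjE vec_component)
    have detf: "det (matrix f) = 0"
      using \<open>\<not> inj f\<close> det_nz_iff_inj[OF \<open>linear f\<close>] by blast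
    show "f ` S \<in> lmeasurable \<and> ?Q f S"
    proof
      show "f ` S \<in> lmeasurable"
        using lmeasurable_iff_indicator_has_integral \<open>linear f\<close> \<open>\<not> inj f\<close> negligible_UNIV negligible_linear_singular_image by blast
      have "measure lebesgue (f ` S) = 0"
        by (meson \<open>\<not> inj f\<close> \<open>linear f\<close> negligible_imp_measure0 negligible_linear_singular_image)
      also have "\<dots> = \<bar>det (matrix f)\<bar> * measure lebesgue S"
        by (simp add: detf)
      finally show "?Q f S" .
    qed
  next
    fix c and S :: "(real^'n::_) set"
    assume "S \<in> lmeasurable"
    show "(\<lambda>a. \<chi> i. c i * a $ i) ` S \<in> lmeasurable \<and> ?Q (\<lambda>a. \<chi> i. c i * a $ i) S"
    proof
      show "(\<lambda>a. \<chi> i. c i * a $ i) ` S \<in> lmeasurable"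
        by (simp add: \<open>S \<in> lmeasurable\<close> measurable_stretch)
      show "?Q (\<lambda>a. \<chi> i. c i * a $ i) S"
        by (simp add: measure_stretch [OF \<open>S \<in> lmeasurable\<close>, of c] axis_def matrix_def det_diagonal)
    qed
  next
    fix m :: "'n" and n :: "'n" and S :: "(real, 'n) vec set"
    assume "m \<noteq> n" and "S \<in> lmeasurable"
    let ?h = "\<lambda>v::(real, 'n) vec. \<chi> i. v $ Transposition.transpose m n i"
    have lin: "linear ?h"
      by (rule linearI) (simp_all add: plus_vec_def scaleR_vec_def)
    have meq: "measure lebesgue ((\<lambda>v::(real, 'n) vec. \<chi> i. v $ Transposition.transpose m n i) ` cbox a b)
             = measure lebesgue (cbox a b)" for a b
    proof (cases "cbox a b = {}")
      case True then show ?thesis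
        by simp
    next
      case False
      then have him: "?h ` (cbox a b) \<noteq> {}"
        by blast
      have eq: "?h ` (cbox a b) = cbox (?h a) (?h b)"
        by (auto simp: image_iff lambda_swap_Galois mem_box_cart) (metis transpose_involutory)+
      show ?thesis
        using him prod.permute [OF permutes_swap_id, where S=UNIV and g="\<lambda>i. (b - a)$i", symmetric]
        by (simp add: eq content_cbox_cart False)
    qed
    have "(\<chi> i j. if Transposition.transpose m n i = j then 1 else 0) = (\<chi> i j. if j = Transposition.transpose m n i then 1 else (0::real))"
      by (auto intro!: Cart_lambda_cong)
    then have "matrix ?h = transpose(\<chi> i j. mat 1 $ i $ Transposition.transpose m n j)"
      by (auto simp: matrix_eq transpose_def axis_def mat_def matrix_def)
    then have 1: "\<bar>det (matrix ?h)\<bar> = 1"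
      by (simp add: det_permute_columns permutes_swap_id sign_swap_id abs_mult)
    show "?h ` S \<in> lmeasurable \<and> ?Q ?h S"
      using measure_linear_sufficient [OF lin \<open>S \<in> lmeasurable\<close>] meq 1 by force
  next
    fix m n :: "'n" and S :: "(real, 'n) vec set"
    assume "m \<noteq> n" and "S \<in> lmeasurable"
    let ?h = "\<lambda>v::(real, 'n) vec. \<chi> i. if i = m then v $ m + v $ n else v $ i"
    have lin: "linear ?h"
      by (rule linearI) (auto simp: algebra_simps plus_vec_def scaleR_vec_def vec_eq_iff)
    have 1: "det(matrix ?h) = 1"
      using \<open>m \<noteq> n\<close> by (rule det_shear_gen)
    have meq: "measure lebesgue (?h ` (cbox a b)) = measure lebesgue (cbox a b)" for a b
    proof (cases "cbox a b = {}")
      case True then show ?thesis by simp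
    next
      case False
      then have ne: "(+) (\<chi> i. if i = n then - a $ n else 0) ` cbox a b \<noteq> {}"
        by auto
      let ?v = "\<chi> i. if i = n then - a $ n else 0"
      have "?h ` cbox a b
            = (+) (\<chi> i. if i = m \<or> i = n then a $ n else 0) ` ?h ` (+) ?v ` (cbox a b)"
        using \<open>m \<noteq> n\<close> unfolding image_comp o_def by (force simp: vec_eq_iff)
      then have "measure lebesgue (?h ` (cbox a b))
               = measure lebesgue ((\<lambda>v. \<chi> i. if i = m then v $ m + v $ n else v $ i) `
                                   (+) ?v ` cbox a b)"
        by (rule ssubst) (rule measure_translation)
      also have "\<dots> = measure lebesgue ((\<lambda>v. \<chi> i. if i = m then v $ m + v $ n else v $ i) ` cbox (?v +a) (?v + b))"
        by (metis (no_types, lifting) cbox_translation)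
      also have "\<dots> = measure lebesgue ((+) ?v ` cbox a b)"
        apply (subst measure_shear_interval)
        using \<open>m \<noteq> n\<close> ne apply auto
        apply (simp add: cbox_translation)
        by (metis cbox_borel cbox_translation measure_completion sets_lborel)
      also have "\<dots> = measure lebesgue (cbox a b)"
        by (rule measure_translation)
        finally show ?thesis .
      qed
    show "?h ` S \<in> lmeasurable \<and> ?Q ?h S"
      using measure_linear_sufficient [OF lin \<open>S \<in> lmeasurable\<close>] meq 1 by force
  qed
  with assms show "(f ` S) \<in> lmeasurable" "?Q f S"
    by metis+
qed



lemma lborel_basis_perm:
  fixes T :: "'a::euclidean_space \<Rightarrow> 'b::euclidean_space" and \<sigma> :: "'a \<Rightarrow> 'b"
  assumes bij: "bij_betw \<sigma> Basis Basis" and T: "\<And>x b. b \<in> Basis \<Longrightarrow> T x \<bullet> \<sigma> b = x \<bullet> b"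
  shows "distr lborel borel T = lborel"
proof -
  have Teq: "T x = (\<Sum>b\<in>Basis. (x \<bullet> b) *\<^sub>R \<sigma> b)" for x
  proof (rule euclidean_eqI)
    fix b' :: 'b assume b': "b' \<in> Basis"
    then obtain b where b: "b \<in> Basis" "b' = \<sigma> b" using bij by (metis bij_betw_iff_bijections)
    have "(\<Sum>c\<in>Basis. (x \<bullet> c) *\<^sub>R \<sigma> c) \<bullet> b' = (\<Sum>c\<in>(Basis::'a set). (x \<bullet> c) * (\<sigma> c \<bullet> \<sigma> b))"
      by (simp add: inner_sum_left b)
    also have "\<dots> = (\<Sum>c\<in>Basis. if c = b then x \<bullet> c else 0)"
    proof (rule sum.cong)
      fix c :: 'a assume c: "c \<in> Basis"
      have "\<sigma> c \<in> Basis" "\<sigma> b \<in> Basis" using bij c b by (auto simp: bij_betw_def)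
      moreover have "\<sigma> c = \<sigma> b \<longleftrightarrow> c = b" using bij c b by (auto simp: bij_betw_def inj_on_def)
      ultimately show "(x \<bullet> c) * (\<sigma> c \<bullet> \<sigma> b) = (if c = b then x \<bullet> c else 0)"
        by (auto simp: inner_Basis)
    qed simp
    also have "\<dots> = x \<bullet> b" using b by simp
    finally show "T x \<bullet> b' = (\<Sum>c\<in>Basis. (x \<bullet> c) *\<^sub>R \<sigma> c) \<bullet> b'" using T b by simp
  qed
  have lin: "linear T"
    by (rule linearI) (simp_all add: Teq inner_add_left scaleR_add_left sum.distrib scaleR_sum_right)
  hence [measurable]: "T \<in> borel_measurable borel"
    by (intro borel_measurable_continuous_onI linear_continuous_on) (simp add: linear_conv_bounded_linear)
  show ?thesis
  proof (rule lborel_eqI[symmetric])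
    fix l u :: 'b assume le: "\<And>b. b \<in> Basis \<Longrightarrow> l \<bullet> b \<le> u \<bullet> b"
    define l' where "l' = (\<Sum>b\<in>Basis. (l \<bullet> \<sigma> b) *\<^sub>R b)"
    define u' where "u' = (\<Sum>b\<in>Basis. (u \<bullet> \<sigma> b) *\<^sub>R b)"
    have l'b: "l' \<bullet> b = l \<bullet> \<sigma> b" if "b \<in> Basis" for b
      using that by (simp add: l'_def inner_sum_left inner_Basis if_distrib cong: if_cong)
    have u'b: "u' \<bullet> b = u \<bullet> \<sigma> b" if "b \<in> Basis" for b
      using that by (simp add: u'_def inner_sum_left inner_Basis if_distrib cong: if_cong)
    have pre: "T -` box l u = box l' u'"
    proof -
      have "x \<in> T -` box l u \<longleftrightarrow> (\<forall>b\<in>Basis. l \<bullet> \<sigma> b < T x \<bullet> \<sigma> b \<and> T x \<bullet> \<sigma> b < u \<bullet> \<sigma> b)" for x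
      proof -
        have "x \<in> T -` box l u \<longleftrightarrow> (\<forall>b'\<in>Basis. l \<bullet> b' < T x \<bullet> b' \<and> T x \<bullet> b' < u \<bullet> b')"
          by (simp add: mem_box)
        also have "\<dots> \<longleftrightarrow> (\<forall>b\<in>Basis. l \<bullet> \<sigma> b < T x \<bullet> \<sigma> b \<and> T x \<bullet> \<sigma> b < u \<bullet> \<sigma> b)"
        proof
          assume "\<forall>b'\<in>Basis. l \<bullet> b' < T x \<bullet> b' \<and> T x \<bullet> b' < u \<bullet> b'"
          then show "\<forall>b\<in>Basis. l \<bullet> \<sigma> b < T x \<bullet> \<sigma> b \<and> T x \<bullet> \<sigma> b < u \<bullet> \<sigma> b"
            using bij by (auto simp: bij_betw_def)
        next
          assume H: "\<forall>b\<in>Basis. l \<bullet> \<sigma> b < T x \<bullet> \<sigma> b \<and> T x \<bullet> \<sigma> b < u \<bullet> \<sigma> b"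
          show "\<forall>b'\<in>Basis. l \<bullet> b' < T x \<bullet> b' \<and> T x \<bullet> b' < u \<bullet> b'"
          proof
            fix b' :: 'b assume "b' \<in> Basis"
            then obtain b where "b \<in> Basis" "b' = \<sigma> b" using bij by (auto simp: bij_betw_def)
            then show "l \<bullet> b' < T x \<bullet> b' \<and> T x \<bullet> b' < u \<bullet> b'" using H by simp
          qed
        qed
        finally show ?thesis .
      qed
      then show ?thesis using T by (auto simp: mem_box l'b u'b)
    qed
    have "emeasure (distr lborel borel T) (box l u) = emeasure lborel (T -` box l u)"
      by (subst emeasure_distr) auto
    also have "\<dots> = (\<Prod>b\<in>Basis. (u' - l') \<bullet> b)"
      unfolding pre
      by (rule emeasure_lborel_box) (use le bij in \<open>auto simp: l'b u'b bij_betw_def\<close>)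
    also have "\<dots> = ennreal (\<Prod>b\<in>Basis. (u - l) \<bullet> \<sigma> b)"
      by (intro arg_cong[where f=ennreal] prod.cong) (auto simp: inner_diff_left l'b u'b)
    also have "\<dots> = ennreal (\<Prod>b\<in>Basis. (u - l) \<bullet> b)"
      using prod.reindex_bij_betw[OF bij, of "\<lambda>b. (u - l) \<bullet> b"] by simp
    finally show "emeasure (distr lborel borel T) (box l u) = ennreal (\<Prod>b\<in>Basis. (u - l) \<bullet> b)" .
  qed simp
qed


lemma nn_integral_scale_euclid:
  fixes g :: "'a::euclidean_space \<Rightarrow> ennreal"
  assumes [measurable]: "g \<in> borel_measurable borel" and z: "0 < z"
  shows "(\<integral>\<^sup>+x. g ((1/z) *\<^sub>R x) \<partial>lborel) = ennreal (z ^ DIM('a)) * (\<integral>\<^sup>+u. g u \<partial>lborel)"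
proof -
  have "(\<integral>\<^sup>+x. g ((1/z) *\<^sub>R x) \<partial>lborel) =
     (\<integral>\<^sup>+x. g ((1/z) *\<^sub>R x) \<partial>density (distr lborel borel (\<lambda>x. 0 + z *\<^sub>R x)) (\<lambda>_. \<bar>z\<bar>^DIM('a)))"
  proof -
    have L: "(lborel::'a measure) = density (distr lborel borel (\<lambda>x. 0 + z *\<^sub>R x)) (\<lambda>_. \<bar>z\<bar>^DIM('a))"
      using lborel_affine[of z "0::'a"] z by simp
    show ?thesis by (simp only: L[symmetric])
  qed
  also have "\<dots> = (\<integral>\<^sup>+x. ennreal (\<bar>z\<bar>^DIM('a)) * g ((1/z) *\<^sub>R x) \<partial>distr lborel borel (\<lambda>x. 0 + z *\<^sub>R x))"
    by (subst nn_integral_density) auto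
  also have "\<dots> = (\<integral>\<^sup>+u. ennreal (\<bar>z\<bar>^DIM('a)) * g ((1/z) *\<^sub>R (0 + z *\<^sub>R u)) \<partial>lborel)"
    by (subst nn_integral_distr) auto
  also have "\<dots> = (\<integral>\<^sup>+u. ennreal (z^DIM('a)) * g u \<partial>lborel)"
    using z by simp
  also have "\<dots> = ennreal (z ^ DIM('a)) * (\<integral>\<^sup>+u. g u \<partial>lborel)"
    by (rule nn_integral_cmult) auto
  finally show ?thesis .
qed

lemma nn_integral_affine_euclid:
  fixes G :: "'a::euclidean_space \<Rightarrow> ennreal"
  assumes [measurable]: "G \<in> borel_measurable borel" and c: "c \<noteq> 0"
  shows "(\<integral>\<^sup>+x. G x \<partial>lborel) = ennreal (\<bar>c\<bar> ^ DIM('a)) * (\<integral>\<^sup>+u. G (t + c *\<^sub>R u) \<partial>lborel)"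
proof -
  have L: "(lborel::'a measure) = density (distr lborel borel (\<lambda>x. t + c *\<^sub>R x)) (\<lambda>_. \<bar>c\<bar>^DIM('a))"
    using lborel_affine[of c t] c by simp
  have "(\<integral>\<^sup>+x. G x \<partial>lborel) = (\<integral>\<^sup>+x. G x \<partial>density (distr lborel borel (\<lambda>x. t + c *\<^sub>R x)) (\<lambda>_. \<bar>c\<bar>^DIM('a)))"
    by (simp only: L[symmetric])
  also have "\<dots> = (\<integral>\<^sup>+x. ennreal (\<bar>c\<bar>^DIM('a)) * G x \<partial>distr lborel borel (\<lambda>x. t + c *\<^sub>R x))"
    by (subst nn_integral_density) auto
  also have "\<dots> = (\<integral>\<^sup>+u. ennreal (\<bar>c\<bar>^DIM('a)) * G (t + c *\<^sub>R u) \<partial>lborel)"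
    by (subst nn_integral_distr) auto
  also have "\<dots> = ennreal (\<bar>c\<bar>^DIM('a)) * (\<integral>\<^sup>+u. G (t + c *\<^sub>R u) \<partial>lborel)"
    by (rule nn_integral_cmult) auto
  finally show ?thesis .
qed

lemma emeasure_affine_image:
  fixes A :: "'a::euclidean_space set"
  assumes A: "A \<in> sets borel" and c: "c \<noteq> 0"
  shows "emeasure lborel ((\<lambda>u. t + c *\<^sub>R u) ` A) = ennreal (\<bar>c\<bar> ^ DIM('a)) * emeasure lborel A"
proof -
  let ?B = "(\<lambda>u. t + c *\<^sub>R u) ` A"
  have pre: "(\<lambda>u. t + c *\<^sub>R u) -` ?B = A" using c by auto
  have "?B = (\<lambda>x. (1/c) *\<^sub>R (x - t)) -` A"
  proof
    show "?B \<subseteq> (\<lambda>x. (1/c) *\<^sub>R (x - t)) -` A" using c by auto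
    show "(\<lambda>x. (1/c) *\<^sub>R (x - t)) -` A \<subseteq> ?B"
    proof
      fix x assume "x \<in> (\<lambda>x. (1/c) *\<^sub>R (x - t)) -` A"
      moreover have "x = t + c *\<^sub>R ((1/c) *\<^sub>R (x - t))" using c by simp
      ultimately show "x \<in> ?B" by blast
    qed
  qed
  then have [measurable]: "?B \<in> sets borel"
  proof -
    have "(\<lambda>x. (1/c) *\<^sub>R (x - t)) \<in> borel_measurable (borel :: 'a measure)"
      by (intro borel_measurable_continuous_onI continuous_intros)
    from measurable_sets[OF this A] show ?thesis by (simp add: \<open>?B = _\<close>)
  qed
  have "emeasure lborel ?B = (\<integral>\<^sup>+x. indicator ?B x \<partial>lborel)" by simp
  also have "\<dots> = ennreal (\<bar>c\<bar> ^ DIM('a)) * (\<integral>\<^sup>+u. indicator ?B (t + c *\<^sub>R u) \<partial>lborel)"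
    by (rule nn_integral_affine_euclid) (auto simp: c)
  also have "(\<lambda>u. indicator ?B (t + c *\<^sub>R u) :: ennreal) = indicator A"
    using c by (auto simp: indicator_def fun_eq_iff)
  finally show ?thesis using A by simp
qed

lemma nn_integral_power01:
  "(\<integral>\<^sup>+z. indicator {0<..1} z * ennreal (z ^ k) \<partial>lborel) = ennreal (1 / (real k + 1))"
proof -
  have "((\<lambda>z. z ^ k) has_integral (1 ^ Suc k / real (Suc k) - 0 ^ Suc k / real (Suc k))) {0..1::real}"
  proof (rule fundamental_theorem_of_calculus)
    fix x :: real
    have "((\<lambda>z. z ^ Suc k / real (Suc k)) has_real_derivative x ^ k) (at x)"
      by (intro derivative_eq_intros) (auto simp: field_simps simp del: of_nat_Suc)
    then show "((\<lambda>z. z ^ Suc k / real (Suc k)) has_vector_derivative x ^ k) (at x within {0..1})"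
      by (simp add: has_real_derivative_iff_has_vector_derivative[symmetric] has_field_derivative_at_within)
  qed simp
  then have I: "((\<lambda>z. z ^ k) has_integral (1 / (real k + 1))) {0..1::real}" by (simp add: add.commute)
  have "(\<integral>\<^sup>+z. indicator {0<..1} z * ennreal (z ^ k) \<partial>lborel) = (\<integral>\<^sup>+z. ennreal (z ^ k) * indicator {0..1} z \<partial>lborel)"
    by (intro nn_integral_cong_AE, use AE_lborel_singleton[of 0] in eventually_elim) (auto split: split_indicator)
  also have "\<dots> = ennreal (1 / (real k + 1))"
    by (rule nn_integral_has_integral_lebesgue'[OF _ I]) auto
  finally show ?thesis .
qed

lemma cone_integral:
  fixes g :: "'a::euclidean_space \<Rightarrow> ennreal"
  assumes [measurable]: "g \<in> borel_measurable borel"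
  shows "(\<integral>\<^sup>+z. \<integral>\<^sup>+x. indicator {0<..1} z * ennreal (z ^ m) * g ((1/z) *\<^sub>R x) \<partial>lborel \<partial>lborel)
     = ennreal (1 / (real (DIM('a) + m) + 1)) * (\<integral>\<^sup>+u. g u \<partial>lborel)"
proof -
  have "(\<integral>\<^sup>+z. \<integral>\<^sup>+x. indicator {0<..1} z * ennreal (z ^ m) * g ((1/z) *\<^sub>R x) \<partial>lborel \<partial>lborel)
     = (\<integral>\<^sup>+z. (indicator {0<..1} z * ennreal (z ^ (DIM('a) + m))) * (\<integral>\<^sup>+u. g u \<partial>lborel) \<partial>lborel)"
  proof (rule nn_integral_cong)
    fix z :: real
    show "(\<integral>\<^sup>+x. indicator {0<..1} z * ennreal (z ^ m) * g ((1/z) *\<^sub>R x) \<partial>lborel) =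
          (indicator {0<..1} z * ennreal (z ^ (DIM('a) + m))) * (\<integral>\<^sup>+u. g u \<partial>lborel)"
    proof (cases "z \<in> {0<..1}")
      case True
      then have z: "0 < z" by simp
      have "(\<integral>\<^sup>+x. indicator {0<..1} z * ennreal (z ^ m) * g ((1/z) *\<^sub>R x) \<partial>lborel)
          = ennreal (z ^ m) * (\<integral>\<^sup>+x. g ((1/z) *\<^sub>R x) \<partial>lborel)"
        using True by (subst nn_integral_cmult[symmetric]) (auto simp: mult.assoc)
      also have "\<dots> = ennreal (z ^ m) * (ennreal (z ^ DIM('a)) * (\<integral>\<^sup>+u. g u \<partial>lborel))"
        by (simp add: nn_integral_scale_euclid z)
      also have "\<dots> = (indicator {0<..1} z * ennreal (z ^ (DIM('a) + m))) * (\<integral>\<^sup>+u. g u \<partial>lborel)"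
        using True z by (simp add: power_add ennreal_mult' mult_ac)
      finally show ?thesis .
    qed simp
  qed
  also have "\<dots> = (\<integral>\<^sup>+z. indicator {0<..1} z * ennreal (z ^ (DIM('a) + m)) \<partial>lborel) * (\<integral>\<^sup>+u. g u \<partial>lborel)"
    by (rule nn_integral_multc) auto
  also have "\<dots> = ennreal (1 / (real (DIM('a) + m) + 1)) * (\<integral>\<^sup>+u. g u \<partial>lborel)"
    by (simp only: nn_integral_power01)
  finally show ?thesis .
qed


lemma sum_UNIV_option: "(\<Sum>i\<in>(UNIV::'a::finite option set). g i) = g None + (\<Sum>k\<in>UNIV. g (Some k))"
proof -
  have "(UNIV::'a option set) = insert None (range Some)" by (rule UNIV_option_conv)
  then have "(\<Sum>i\<in>(UNIV::'a option set). g i) = (\<Sum>i\<in>insert None (range Some). g i)" by simp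
  also have "\<dots> = g None + (\<Sum>i\<in>range Some. g i)" by (subst sum.insert) auto
  also have "(\<Sum>i\<in>range Some. g i) = (\<Sum>k\<in>UNIV. g (Some k))" by (subst sum.reindex) auto
  finally show ?thesis .
qed

lemma vm_None: "(vertex_matrix v *v w) $ None = (\<Sum>j\<in>UNIV. w $ j)"
  by (simp add: vertex_matrix_def matrix_vector_mult_def)

lemma vm_Some: "(vertex_matrix v *v w) $ Some k = (\<Sum>j\<in>UNIV. w $ j *\<^sub>R v j) $ k"
  by (simp add: vertex_matrix_def matrix_vector_mult_def sum_component mult.commute)

lemma vmT: "(transpose (vertex_matrix v) *v y) $ j = (\<chi> k. y $ Some k) \<bullet> v j + y $ None"
  by (simp add: vertex_matrix_def matrix_vector_mult_def transpose_def sum_UNIV_option inner_vec_def mult.commute)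

locale simplex_setup =
  fixes v :: "'n::finite option \<Rightarrow> real^'n"
  assumes inj: "inj v" and indep: "\<not> affine_dependent (range v)"
begin

abbreviation "J \<equiv> convex hull (range v)"
abbreviation "V \<equiv> vertex_matrix v"

lemma J_eq: "J = {y. \<exists>a. (\<forall>j. 0 \<le> a j) \<and> sum a UNIV = 1 \<and> (\<Sum>j\<in>UNIV. a j *\<^sub>R v j) = y}"
proof -
  have fin: "finite (range v)" by simp
  have "J = {y. \<exists>u. (\<forall>x\<in>range v. 0 \<le> u x) \<and> sum u (range v) = 1 \<and> sum (\<lambda>x. u x *\<^sub>R x) (range v) = y}"
    by (rule convex_hull_finite[OF fin])
  also have "\<dots> = {y. \<exists>a. (\<forall>j. 0 \<le> a j) \<and> sum a UNIV = 1 \<and> (\<Sum>j\<in>UNIV. a j *\<^sub>R v j) = y}"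
  proof -
    have *: "sum u (range v) = (\<Sum>j\<in>UNIV. u (v j))" "sum (\<lambda>x. u x *\<^sub>R x) (range v) = (\<Sum>j\<in>UNIV. u (v j) *\<^sub>R v j)" for u :: "real^'n \<Rightarrow> real"
      using inj by (simp_all add: sum.reindex)
    show ?thesis
    proof (intro Collect_cong iffI)
      fix y assume "\<exists>u. (\<forall>x\<in>range v. 0 \<le> u x) \<and> sum u (range v) = 1 \<and> sum (\<lambda>x. u x *\<^sub>R x) (range v) = y"
      then obtain u where "(\<forall>x\<in>range v. 0 \<le> u x)" "sum u (range v) = 1" "sum (\<lambda>x. u x *\<^sub>R x) (range v) = y" by blast
      then show "\<exists>a. (\<forall>j. 0 \<le> a j) \<and> sum a UNIV = 1 \<and> (\<Sum>j\<in>UNIV. a j *\<^sub>R v j) = y"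
        by (intro exI[of _ "\<lambda>j. u (v j)"]) (simp add: *)
    next
      fix y assume "\<exists>a. (\<forall>j. 0 \<le> a j) \<and> sum a UNIV = 1 \<and> (\<Sum>j\<in>UNIV. a j *\<^sub>R v j) = y"
      then obtain a where a: "\<forall>j. 0 \<le> a j" "sum a UNIV = 1" "(\<Sum>j\<in>UNIV. a j *\<^sub>R v j) = y" by blast
      define u where "u = (\<lambda>x. a (inv v x))"
      have "u (v j) = a j" for j using inj by (simp add: u_def)
      then show "\<exists>u. (\<forall>x\<in>range v. 0 \<le> u x) \<and> sum u (range v) = 1 \<and> sum (\<lambda>x. u x *\<^sub>R x) (range v) = y"
        using a by (intro exI[of _ u]) (auto simp: *)
    qed
  qed
  finally show ?thesis .
qed

lemma V_inj0: assumes "V *v w = 0" shows "w = 0"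
proof (rule ccontr)
  assume nz: "w \<noteq> 0"
  define U where "U = (\<lambda>x. w $ inv v x)"
  have Uv: "U (v j) = w $ j" for j using inj by (simp add: U_def)
  have s1: "sum U (range v) = (\<Sum>j\<in>UNIV. w $ j)" using inj by (simp add: sum.reindex Uv)
  have s2: "(\<Sum>x\<in>range v. U x *\<^sub>R x) = (\<Sum>j\<in>UNIV. w $ j *\<^sub>R v j)" using inj by (simp add: sum.reindex Uv)
  have "(\<Sum>j\<in>UNIV. w $ j) = 0" using assms vm_None[of v w] by simp
  moreover have "(\<Sum>j\<in>UNIV. w $ j *\<^sub>R v j) = 0"
    using assms vm_Some[of v w] by (simp add: vec_eq_iff)
  moreover have fin: "finite (range v)" by simp
  moreover obtain j where "w $ j \<noteq> 0" using nz by (auto simp: vec_eq_iff)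
  ultimately have "affine_dependent (range v)"
    unfolding affine_dependent_explicit_finite[OF fin]
    by (intro exI[of _ U]) (auto simp: s1 s2 Uv intro!: bexI[of _ "v j"])
  with indep show False by simp
qed

lemma VT_bij: "surj ((*v) (transpose V))" "inj ((*v) (transpose V))"
proof -
  have "inj ((*v) V)" using V_inj0 by (metis matrix_left_invertible_ker matrix_left_invertible_injective)
  then obtain B where B: "B ** V = mat 1" using matrix_left_invertible_injective by blast
  then have B2: "V ** B = mat 1" using matrix_left_right_inverse by blast
  have "transpose V ** transpose B = mat 1" using arg_cong[OF B, of transpose] by (simp add: matrix_transpose_mul)
  then show "surj ((*v) (transpose V))" using matrix_right_invertible_surjective by blast
  have "transpose B ** transpose V = mat 1" using arg_cong[OF B2, of transpose] by (simp add: matrix_transpose_mul)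
  then show "inj ((*v) (transpose V))" using matrix_left_invertible_injective by blast
qed

lemma interp_exists: "\<exists>a b. \<forall>j. a \<bullet> v j + b = c j"
proof -
  obtain y where "transpose V *v y = (\<chi> j. c j)" using VT_bij(1) by (metis surjD)
  then have "\<forall>j. (\<chi> k. y $ Some k) \<bullet> v j + y $ None = c j"
    by (metis vmT vec_lambda_beta)
  then show ?thesis by blast
qed

lemma interp_unique0:
  assumes "\<forall>j. a \<bullet> v j + b = 0" shows "a = 0 \<and> b = 0"
proof -
  define y :: "real^'n option" where "y = (\<chi> i. case i of None \<Rightarrow> b | Some k \<Rightarrow> a $ k)"
  have "(\<chi> k. y $ Some k) = a" by (simp add: y_def vec_eq_iff)
  then have "(transpose V *v y) $ j = 0" for j using assms vmT[of v y j] by (simp add: y_def)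
  then have "transpose V *v y = 0" by (simp add: vec_eq_iff)
  then have "y = 0" using VT_bij(2) by (metis matrix_vector_mult_0_right injD)
  then show ?thesis by (auto simp: y_def vec_eq_iff split: option.splits)
qed

lemma affine_interp_char:
  "\<exists>a b. affine_interp v g = (\<lambda>x. a \<bullet> x + b) \<and> (\<forall>j. a \<bullet> v j + b = g (v j))"
proof -
  obtain a b where ab: "\<forall>j. a \<bullet> v j + b = g (v j)" using interp_exists[of "\<lambda>j. g (v j)"] by blast
  let ?P = "\<lambda>h. (\<exists>a b. h = (\<lambda>x. a \<bullet> x + b)) \<and> (\<forall>j. h (v j) = g (v j))"
  have "?P (\<lambda>x. a \<bullet> x + b)" using ab by auto
  moreover have "h = (\<lambda>x. a \<bullet> x + b)" if "?P h" for h
  proof -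
    from that obtain a' b' where h: "h = (\<lambda>x. a' \<bullet> x + b')" "\<forall>j. h (v j) = g (v j)" by blast
    then have "\<forall>j. (a' - a) \<bullet> v j + (b' - b) = 0" using ab by (auto simp: inner_diff_left algebra_simps)
    then have "a' - a = 0 \<and> b' - b = 0" by (rule interp_unique0)
    then show ?thesis using h by auto
  qed
  ultimately have "affine_interp v g = (\<lambda>x. a \<bullet> x + b)"
    unfolding affine_interp_def by (rule the_equality)
  then show ?thesis using ab by blast
qed

lemma affine_interp_comb:
  assumes "sum c UNIV = 1"
  shows "affine_interp v g (\<Sum>j\<in>UNIV. c j *\<^sub>R v j) = (\<Sum>j\<in>UNIV. c j * g (v j))"
proof -
  obtain a b where ab: "affine_interp v g = (\<lambda>x. a \<bullet> x + b)" "\<forall>j. a \<bullet> v j + b = g (v j)"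
    using affine_interp_char by blast
  have "affine_interp v g (\<Sum>j\<in>UNIV. c j *\<^sub>R v j) = (\<Sum>j\<in>UNIV. c j * (a \<bullet> v j)) + (\<Sum>j\<in>UNIV. c j) * b"
    using assms by (simp add: ab(1) inner_sum_right)
  also have "\<dots> = (\<Sum>j\<in>UNIV. c j * (a \<bullet> v j + b))"
    by (simp add: sum.distrib distrib_left) (simp add: sum_distrib_right[symmetric] assms)
  finally show ?thesis using assms ab(2) by simp
qed

lemma affine_interp_continuous: "continuous_on S (affine_interp v g)"
proof -
  obtain a b where ab: "affine_interp v g = (\<lambda>x. a \<bullet> x + b)"
    using affine_interp_char by blast
  show ?thesis unfolding ab by (intro continuous_intros)
qed

end


definition Tiso :: "(real^'n::finite) \<times> real \<Rightarrow> real^('n option)" where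
  "Tiso p = (\<chi> i. case i of None \<Rightarrow> snd p | Some k \<Rightarrow> fst p $ k)"

lemma Tiso_inner: "Tiso p \<bullet> Tiso q = p \<bullet> q"
  by (simp add: Tiso_def inner_vec_def sum_UNIV_option inner_prod_def split: prod.splits)

lemma Tiso_linear: "linear Tiso"
  by (rule linearI) (auto simp: Tiso_def vec_eq_iff split: option.splits)

lemma Tiso_inj: "inj Tiso"
proof (rule injI)
  fix p q :: "(real^'n) \<times> real" assume "Tiso p = Tiso q"
  then have *: "Tiso p $ i = Tiso q $ i" for i by simp
  have "snd p = snd q" using *[of None] by (simp add: Tiso_def)
  moreover have "fst p = fst q" using *[of "Some _"] by (simp add: Tiso_def vec_eq_iff)
  ultimately show "p = q" by (simp add: prod_eq_iff)
qed

lemma Tiso_Basis: "bij_betw Tiso Basis Basis"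
proof -
  have img: "Tiso ` Basis = (Basis :: (real^('n::finite option)) set)"
  proof
    have e1: "Tiso (axis k 1 :: real^'n, 0::real) = axis (Some k) 1" for k
      by (auto simp: Tiso_def axis_def vec_eq_iff split: option.splits)
    have e2: "Tiso (0 :: real^'n, 1::real) = axis None 1"
      by (auto simp: Tiso_def axis_def vec_eq_iff split: option.splits)
    show "Tiso ` Basis \<subseteq> (Basis :: (real^('n option)) set)"
    proof
      fix c assume "c \<in> Tiso ` (Basis :: ((real^'n) \<times> real) set)"
      then obtain b :: "(real^'n) \<times> real" where b: "b \<in> Basis" "c = Tiso b" by blast
      from b(1) consider k where "b = (axis k 1, 0)" | "b = (0, 1)" by (auto simp: Basis_prod_def Basis_vec_def)
      then show "c \<in> Basis" using e1 e2 b(2) by cases (auto simp: Basis_vec_def)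
    qed
    show "(Basis :: (real^('n option)) set) \<subseteq> Tiso ` Basis"
    proof
      fix b :: "real^('n option)" assume "b \<in> Basis"
      then obtain i where b: "b = axis i 1" by (auto simp: Basis_vec_def)
      show "b \<in> Tiso ` Basis"
      proof (cases i)
        case None
        then have "b = Tiso (0, 1)" by (auto simp: b Tiso_def axis_def vec_eq_iff split: option.splits)
        then show ?thesis by (auto simp: Basis_prod_def)
      next
        case (Some k)
        then have "b = Tiso (axis k 1, 0)" by (auto simp: b Tiso_def axis_def vec_eq_iff split: option.splits)
        moreover have "(axis k 1 :: real^'n, 0::real) \<in> Basis" by (auto simp: Basis_prod_def Basis_vec_def)
        ultimately show ?thesis by blast
      qed
    qed
  qed
  show ?thesis unfolding bij_betw_def using img Tiso_inj by (auto intro: inj_on_subset)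
qed

lemma distr_Tiso: "distr lborel borel Tiso = lborel"
  by (rule lborel_basis_perm[OF Tiso_Basis]) (simp add: Tiso_inner)

lemma Tiso_measurable[measurable]: "Tiso \<in> borel_measurable borel"
  using Tiso_linear by (intro borel_measurable_continuous_onI linear_continuous_on) (simp add: linear_conv_bounded_linear)

lemma emeasure_Tiso_vimage:
  assumes "A \<in> sets borel"
  shows "emeasure lborel (Tiso -` A) = emeasure lborel A"
proof -
  have "emeasure lborel A = emeasure (distr lborel borel Tiso) A" by (simp add: distr_Tiso)
  also have "\<dots> = emeasure lborel (Tiso -` A)" using assms by (subst emeasure_distr) auto
  finally show ?thesis by simp
qed

lemma std_simplex_vec:
  "convex hull (insert 0 Basis) = {w::real^'m::finite. (\<forall>i. 0 \<le> w $ i) \<and> (\<Sum>i\<in>UNIV. w $ i) \<le> 1}"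
proof -
  have "sum (\<lambda>i. w \<bullet> i) (Basis :: (real^'m) set) = (\<Sum>i\<in>UNIV. w $ i)" for w :: "real^'m"
  proof -
    have "sum (\<lambda>i. w \<bullet> i) (Basis :: (real^'m) set) = sum (\<lambda>i. w \<bullet> i) ((\<lambda>k. axis k 1) ` UNIV)"
    proof -
      have "(Basis::(real^'m) set) = (\<lambda>k. axis k 1) ` UNIV" by (auto simp: Basis_vec_def)
      then show ?thesis by simp
    qed
    also have "\<dots> = (\<Sum>k\<in>UNIV. w \<bullet> axis k 1)"
      by (subst sum.reindex) (auto simp: inj_on_def axis_eq_axis)
    finally show ?thesis by (simp add: inner_axis)
  qed
  moreover have "(\<forall>i\<in>(Basis :: (real^'m) set). 0 \<le> w \<bullet> i) \<longleftrightarrow> (\<forall>i. 0 \<le> w $ i)" for w :: "real^'m"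
    by (auto simp: Basis_vec_def inner_axis)
  ultimately show ?thesis unfolding std_simplex by simp
qed

context simplex_setup
begin

definition Cone :: "((real^'n) \<times> real) set" where
  "Cone = Tiso -` ((\<lambda>w. V *v w) ` (convex hull (insert 0 Basis)))"

lemma Cone_mem:
  assumes z: "0 < z"
  shows "(x, z) \<in> Cone \<longleftrightarrow> z \<le> 1 \<and> (1/z) *\<^sub>R x \<in> J"
proof
  assume "(x, z) \<in> Cone"
  then obtain w where w: "\<forall>i. 0 \<le> w $ i" "(\<Sum>i\<in>UNIV. w $ i) \<le> 1" "V *v w = Tiso (x, z)"
    by (auto simp: Cone_def std_simplex_vec)
  have zs: "z = (\<Sum>i\<in>UNIV. w $ i)" using arg_cong[OF w(3), of "\<lambda>u. u $ None"] by (simp add: vm_None Tiso_def)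
  have xs: "x = (\<Sum>j\<in>UNIV. w $ j *\<^sub>R v j)"
    using arg_cong[OF w(3), of "\<lambda>u. u $ Some _"] by (auto simp: vm_Some Tiso_def vec_eq_iff)
  have "(1/z) *\<^sub>R x = (\<Sum>j\<in>UNIV. (w $ j / z) *\<^sub>R v j)"
    by (simp add: xs scaleR_sum_right)
  moreover have "(\<Sum>j\<in>UNIV. w $ j / z) = 1" using z zs by (simp add: sum_divide_distrib[symmetric])
  ultimately have "(1/z) *\<^sub>R x \<in> J" using w(1) z unfolding J_eq by (auto intro!: exI[of _ "\<lambda>j. w $ j / z"])
  then show "z \<le> 1 \<and> (1/z) *\<^sub>R x \<in> J" using zs w(2) by simp
next
  assume H: "z \<le> 1 \<and> (1/z) *\<^sub>R x \<in> J"
  then obtain a where a: "\<forall>j. 0 \<le> a j" "sum a UNIV = 1" "(\<Sum>j\<in>UNIV. a j *\<^sub>R v j) = (1/z) *\<^sub>R x"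
    unfolding J_eq by blast
  define w :: "real^'n option" where "w = (\<chi> j. z * a j)"
  have "(\<Sum>i\<in>UNIV. w $ i) = z" using a(2) by (simp add: w_def sum_distrib_left[symmetric])
  moreover have "(\<Sum>j\<in>UNIV. w $ j *\<^sub>R v j) = x"
  proof -
    have "(\<Sum>j\<in>UNIV. w $ j *\<^sub>R v j) = z *\<^sub>R (\<Sum>j\<in>UNIV. a j *\<^sub>R v j)"
      by (simp add: w_def scaleR_sum_right)
    then show ?thesis using a(3) z by simp
  qed
  ultimately have "V *v w = Tiso (x, z)"
    by (auto simp: vec_eq_iff Tiso_def vm_None vm_Some split: option.splits)
  moreover have "\<forall>i. 0 \<le> w $ i" using a(1) z by (simp add: w_def)
  ultimately show "(x, z) \<in> Cone" using H \<open>(\<Sum>i\<in>UNIV. w $ i) = z\<close>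
    by (auto simp: Cone_def std_simplex_vec intro!: image_eqI[of _ _ w])
qed

lemma compact_J: "compact J" by (simp add: finite_imp_compact_convex_hull)

lemma Cone_image_compact: "compact ((\<lambda>w. V *v w) ` (convex hull (insert 0 (Basis :: (real^'n option) set))))"
  by (intro compact_continuous_image finite_imp_compact_convex_hull) (auto intro: linear_continuous_on matrix_vector_mul_bounded_linear)

lemma emeasure_Cone: "emeasure lborel Cone = ennreal (\<bar>det V\<bar> / fact (CARD('n) + 1))"
proof -
  let ?S = "convex hull (insert 0 (Basis :: (real^'n option) set))"
  have cS: "compact ?S" by (intro finite_imp_compact_convex_hull) auto
  have "emeasure lborel Cone = emeasure lborel ((\<lambda>w. V *v w) ` ?S)"
    unfolding Cone_def using Cone_image_compact by (intro emeasure_Tiso_vimage) (auto intro: borel_closed compact_imp_closed)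
  also have "\<dots> = ennreal (measure lborel ((\<lambda>w. V *v w) ` ?S))"
    using emeasure_bounded_finite[OF compact_imp_bounded[OF Cone_image_compact]] by (intro emeasure_eq_ennreal_measure) auto
  also have "measure lborel ((\<lambda>w. V *v w) ` ?S) = measure lebesgue ((\<lambda>w. V *v w) ` ?S)"
    using Cone_image_compact by (simp add: borel_compact)
  also have "\<dots> = \<bar>det (matrix (\<lambda>w. V *v w))\<bar> * measure lebesgue ?S"
    by (rule measure_linear_image_gen) (auto intro: lmeasurable_compact cS)
  also have "measure lebesgue ?S = measure lborel ?S" using cS by (simp add: borel_compact)
  also have "\<dots> = 1 / fact (CARD('n) + 1)" by (simp add: content_std_simplex)
  finally show ?thesis by simp
qed

end


context simplex_setup
begin

lemma Cone_neg: assumes "z < 0" shows "(x, z) \<notin> Cone"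
proof
  assume "(x, z) \<in> Cone"
  then obtain w where w: "\<forall>i. 0 \<le> w $ i" "V *v w = Tiso (x, z)"
    by (auto simp: Cone_def std_simplex_vec)
  have zs: "z = (\<Sum>i\<in>UNIV. w $ i)" using arg_cong[OF w(2), of "\<lambda>u. u $ None"] by (simp add: vm_None Tiso_def)
  have "0 \<le> (\<Sum>i\<in>UNIV. w $ i)" using w(1) by (simp add: sum_nonneg)
  with zs assms show False by simp
qed

lemma Cone_borel: "Cone \<in> sets borel"
  unfolding Cone_def using measurable_sets[OF Tiso_measurable borel_compact[OF Cone_image_compact]] by simp

lemma J_borel: "J \<in> sets borel" using compact_J by (simp add: borel_compact)

lemma slice_measurable: "(\<lambda>x. (x, z)) -` S \<in> sets borel" if "S \<in> sets borel" for S :: "((real^'n) \<times> real) set"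
proof -
  have "(\<lambda>x::real^'n. (x, z)) \<in> borel_measurable borel" by (intro borel_measurable_continuous_onI continuous_intros)
  from measurable_sets[OF this that] show ?thesis by simp
qed

lemma emeasure_J_Cone: "emeasure lborel Cone = ennreal (1 / (real CARD('n) + 1)) * emeasure lborel J"
proof -
  have sets: "Cone \<in> sets (lborel \<Otimes>\<^sub>M lborel)" using Cone_borel by (subst lborel_prod) simp
  have "emeasure lborel Cone = emeasure (lborel \<Otimes>\<^sub>M lborel) Cone" by (simp add: lborel_prod)
  also have "\<dots> = (\<integral>\<^sup>+z. emeasure lborel ((\<lambda>x. (x, z)) -` Cone) \<partial>lborel)"
    by (rule lborel_pair.emeasure_pair_measure_alt2[OF sets])
  also have "\<dots> = (\<integral>\<^sup>+z. \<integral>\<^sup>+x. indicator {0<..1} z * ennreal (z ^ 0) * indicator J ((1/z) *\<^sub>R x) \<partial>lborel \<partial>lborel)"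
  proof (rule nn_integral_cong_AE)
    show "AE z in lborel. emeasure lborel ((\<lambda>x. (x, z)) -` Cone) =
        (\<integral>\<^sup>+x. indicator {0<..1} z * ennreal (z ^ 0) * indicator J ((1/z) *\<^sub>R x) \<partial>lborel)"
      using AE_lborel_singleton[of 0]
    proof eventually_elim
      case (elim z)
      have "emeasure lborel ((\<lambda>x. (x, z)) -` Cone) = (\<integral>\<^sup>+x. indicator ((\<lambda>x. (x, z)) -` Cone) x \<partial>lborel)"
        using slice_measurable[OF Cone_borel, of z] by simp
      also have "\<dots> = (\<integral>\<^sup>+x. indicator {0<..1} z * ennreal (z ^ 0) * indicator J ((1/z) *\<^sub>R x) \<partial>lborel)"
      proof (rule nn_integral_cong)
        fix x :: "real^'n"
        show "indicator ((\<lambda>x. (x, z)) -` Cone) x = indicator {0<..1} z * ennreal (z ^ 0) * (indicator J ((1/z) *\<^sub>R x) :: ennreal)"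
        proof (cases "z < 0")
          case True then show ?thesis using Cone_neg[OF True, of x] by (simp add: indicator_def)
        next
          case False
          then have "0 < z" using elim by simp
          then show ?thesis using Cone_mem[of z x] by (simp add: indicator_def)
        qed
      qed
      finally show ?case .
    qed
  qed
  also have "\<dots> = ennreal (1 / (real (DIM(real^'n) + 0) + 1)) * (\<integral>\<^sup>+u. indicator J u \<partial>lborel)"
    by (rule cone_integral) (use J_borel in simp)
  also have "\<dots> = ennreal (1 / (real CARD('n) + 1)) * emeasure lborel J"
    using J_borel by simp
  finally show ?thesis .
qed

lemma emeasure_J: "emeasure lborel J = ennreal (\<bar>det V\<bar> / fact CARD('n))"
proof -
  have "ennreal (1 / (real CARD('n) + 1)) * emeasure lborel J = ennreal (\<bar>det V\<bar> / fact (CARD('n) + 1))"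
    using emeasure_J_Cone emeasure_Cone by simp
  then have "ennreal (real CARD('n) + 1) * (ennreal (1 / (real CARD('n) + 1)) * emeasure lborel J)
     = ennreal (real CARD('n) + 1) * ennreal (\<bar>det V\<bar> / fact (CARD('n) + 1))" by simp
  also have "ennreal (real CARD('n) + 1) * (ennreal (1 / (real CARD('n) + 1)) * emeasure lborel J) = emeasure lborel J"
    by (simp add: mult.assoc[symmetric] ennreal_mult'[symmetric] del: ennreal_plus)
  also have "ennreal (real CARD('n) + 1) * ennreal (\<bar>det V\<bar> / fact (CARD('n) + 1)) = ennreal (\<bar>det V\<bar> / fact CARD('n))"
  proof -
    have "(real CARD('n) + 1) * (\<bar>det V\<bar> / fact (CARD('n) + 1)) = \<bar>det V\<bar> / fact CARD('n)"
    proof -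
      have f: "(fact (CARD('n) + 1) :: real) = (real CARD('n) + 1) * fact CARD('n)" by (simp add: fact_Suc)
      have F: "(fact CARD('n) :: real) > 0" by simp
      have x: "real CARD('n) + 1 > 0" by simp
      have "\<And>(x::real) F a. x > 0 \<Longrightarrow> F > 0 \<Longrightarrow> x * (a / (x * F)) = a / F" by simp
      from this[OF x F] show ?thesis unfolding f .
    qed
    then show ?thesis by (simp add: ennreal_mult'[symmetric] del: ennreal_plus)
  qed
  finally show ?thesis .
qed

end


lemma nn_integral_power01':
  "(\<integral>\<^sup>+s. indicator {0<..<1} s * ennreal ((1 - s) ^ k) \<partial>lborel) = ennreal (1 / (real k + 1))"
proof -
  have "(\<integral>\<^sup>+s. indicator {0<..<1} s * ennreal ((1 - s) ^ k) \<partial>lborel)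
      = ennreal (\<bar>-1\<bar> ^ DIM(real)) * (\<integral>\<^sup>+u. indicator {0<..<1} (1 + (-1) *\<^sub>R u) * ennreal ((1 - (1 + (-1) *\<^sub>R u)) ^ k) \<partial>lborel)"
    by (rule nn_integral_affine_euclid[where c="-1::real" and t=1]) auto
  also have "\<dots> = (\<integral>\<^sup>+u. indicator {0<..1} u * ennreal (u ^ k) \<partial>lborel)"
    by (simp, intro nn_integral_cong_AE, use AE_lborel_singleton[of 1] in eventually_elim) (auto split: split_indicator)
  also have "\<dots> = ennreal (1 / (real k + 1))" by (rule nn_integral_power01)
  finally show ?thesis .
qed

context simplex_setup
begin

definition lam :: "'n option \<Rightarrow> real^'n \<Rightarrow> real" where
  "lam j = affine_interp v (\<lambda>x. if x = v j then 1 else 0)"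

lemma lam_comb:
  assumes "sum a UNIV = 1"
  shows "lam j (\<Sum>i\<in>UNIV. a i *\<^sub>R v i) = a j"
proof -
  have "lam j (\<Sum>i\<in>UNIV. a i *\<^sub>R v i) = (\<Sum>i\<in>UNIV. a i * (if v i = v j then 1 else 0))"
    unfolding lam_def by (rule affine_interp_comb[OF assms])
  also have "\<dots> = (\<Sum>i\<in>UNIV. if i = j then a i else 0)"
    using inj by (intro sum.cong) (auto simp: inj_eq)
  finally show ?thesis by simp
qed

lemma lam_bounds:
  assumes "x \<in> J" shows "0 \<le> lam j x" "lam j x \<le> 1"
proof -
  from assms obtain a where a: "\<forall>i. 0 \<le> a i" "sum a UNIV = 1" "x = (\<Sum>i\<in>UNIV. a i *\<^sub>R v i)"
    unfolding J_eq by auto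
  have "lam j x = a j" using lam_comb[OF a(2)] a(3) by simp
  moreover have "a j \<le> sum a UNIV" using a(1) by (intro member_le_sum) auto
  ultimately show "0 \<le> lam j x" "lam j x \<le> 1" using a by auto
qed

lemma lam_cont: "continuous_on S (lam j)"
  unfolding lam_def by (rule affine_interp_continuous)

lemma homothety:
  assumes s: "0 \<le> s" "s < 1"
  shows "{x \<in> J. s \<le> lam j x} = (\<lambda>u. s *\<^sub>R v j + (1 - s) *\<^sub>R u) ` J"
proof
  show "{x \<in> J. s \<le> lam j x} \<subseteq> (\<lambda>u. s *\<^sub>R v j + (1 - s) *\<^sub>R u) ` J"
  proof
    fix x assume "x \<in> {x \<in> J. s \<le> lam j x}"
    then obtain a where a: "\<forall>i. 0 \<le> a i" "sum a UNIV = 1" "x = (\<Sum>i\<in>UNIV. a i *\<^sub>R v i)" and sl: "s \<le> lam j x"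
      unfolding J_eq by auto
    have aj: "s \<le> a j" using sl lam_comb[OF a(2)] a(3) by simp
    define c where "c = (\<lambda>i. (a i - (if i = j then s else 0)) / (1 - s))"
    have c0: "\<forall>i. 0 \<le> c i" using a(1) aj s by (auto simp: c_def)
    have c1: "sum c UNIV = 1"
    proof -
      have "sum c UNIV = (\<Sum>i\<in>UNIV. a i - (if i = j then s else 0)) / (1 - s)"
        by (simp add: c_def sum_divide_distrib)
      also have "\<dots> = (1 - s) / (1 - s)" by (simp add: sum_subtractf a(2))
      finally show ?thesis using s by simp
    qed
    define u where "u = (\<Sum>i\<in>UNIV. c i *\<^sub>R v i)"
    have "u \<in> J" unfolding J_eq u_def using c0 c1 by auto
    moreover have "x = s *\<^sub>R v j + (1 - s) *\<^sub>R u"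
    proof -
      have "(1 - s) *\<^sub>R u = (\<Sum>i\<in>UNIV. (a i - (if i = j then s else 0)) *\<^sub>R v i)"
        using s by (simp add: u_def scaleR_sum_right c_def)
      also have "\<dots> = x - s *\<^sub>R v j"
        by (simp add: a(3) scaleR_diff_left sum_subtractf if_distrib[of "\<lambda>t. t *\<^sub>R _"] cong: if_cong)
      finally show ?thesis by simp
    qed
    ultimately show "x \<in> (\<lambda>u. s *\<^sub>R v j + (1 - s) *\<^sub>R u) ` J" by blast
  qed
next
  show "(\<lambda>u. s *\<^sub>R v j + (1 - s) *\<^sub>R u) ` J \<subseteq> {x \<in> J. s \<le> lam j x}"
  proof
    fix x assume "x \<in> (\<lambda>u. s *\<^sub>R v j + (1 - s) *\<^sub>R u) ` J"
    then obtain u where u: "u \<in> J" "x = s *\<^sub>R v j + (1 - s) *\<^sub>R u" by blast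
    then obtain a where a: "\<forall>i. 0 \<le> a i" "sum a UNIV = 1" "u = (\<Sum>i\<in>UNIV. a i *\<^sub>R v i)"
      unfolding J_eq by auto
    define b where "b = (\<lambda>i. (1 - s) * a i + (if i = j then s else 0))"
    have b0: "\<forall>i. 0 \<le> b i" using a(1) s by (auto simp: b_def)
    have b1: "sum b UNIV = 1" using a(2) by (simp add: b_def sum.distrib sum_distrib_left[symmetric])
    have xb: "x = (\<Sum>i\<in>UNIV. b i *\<^sub>R v i)"
      by (simp add: u a(3) b_def scaleR_add_left sum.distrib scaleR_sum_right if_distrib[of "\<lambda>t. t *\<^sub>R _"] cong: if_cong)
    have "x \<in> J" unfolding J_eq using b0 b1 xb by auto
    moreover have "lam j x = b j" using lam_comb[OF b1] xb by simp
    moreover have "s \<le> b j" using a(1) s by (simp add: b_def)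
    ultimately show "x \<in> {x \<in> J. s \<le> lam j x}" by simp
  qed
qed

end


context simplex_setup
begin

definition Eset :: "'n option \<Rightarrow> ((real^'n) \<times> real) set" where
  "Eset j = {p. fst p \<in> J \<and> 0 \<le> snd p \<and> snd p \<le> lam j (fst p)}"

lemma Eset_borel: "Eset j \<in> sets borel"
proof -
  have c1: "closed (fst -` J :: ((real^'n) \<times> real) set)" by (intro closed_vimage_fst compact_imp_closed compact_J)
  have c2: "closed {p :: (real^'n) \<times> real. 0 \<le> snd p}" by (intro closed_Collect_le continuous_intros)
  have c3: "closed {p :: (real^'n) \<times> real. snd p \<le> lam j (fst p)}"
    by (intro closed_Collect_le continuous_intros continuous_on_compose2[OF lam_cont[of UNIV j]]) auto
  have "Eset j = (fst -` J) \<inter> {p. 0 \<le> snd p} \<inter> {p. snd p \<le> lam j (fst p)}" by (auto simp: Eset_def)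
  then have "closed (Eset j)" using c1 c2 c3 by (simp add: closed_Int)
  then show ?thesis by (simp add: borel_closed)
qed

lemma lam_nn_integral:
  "(\<integral>\<^sup>+x. ennreal (lam j x) * indicator J x \<partial>lborel) = ennreal (1 / (real CARD('n) + 1)) * emeasure lborel J"
proof -
  have sets: "Eset j \<in> sets (lborel \<Otimes>\<^sub>M lborel)" using Eset_borel by (subst lborel_prod) simp
  have "(\<integral>\<^sup>+x. ennreal (lam j x) * indicator J x \<partial>lborel) = (\<integral>\<^sup>+x. emeasure lborel (Pair x -` Eset j) \<partial>lborel)"
  proof (rule nn_integral_cong)
    fix x :: "real^'n"
    show "ennreal (lam j x) * indicator J x = emeasure lborel (Pair x -` Eset j)"
    proof (cases "x \<in> J")
      case True
      then have "Pair x -` Eset j = {0 .. lam j x}" by (auto simp: Eset_def)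
      then show ?thesis using True lam_bounds[OF True] by simp
    next
      case False
      then have "Pair x -` Eset j = {}" by (auto simp: Eset_def)
      then show ?thesis using False by simp
    qed
  qed
  also have "\<dots> = emeasure (lborel \<Otimes>\<^sub>M lborel) (Eset j)"
    by (rule lborel.emeasure_pair_measure_alt[OF sets, symmetric])
  also have "\<dots> = (\<integral>\<^sup>+s. emeasure lborel ((\<lambda>x. (x, s)) -` Eset j) \<partial>lborel)"
    by (rule lborel_pair.emeasure_pair_measure_alt2[OF sets])
  also have "\<dots> = (\<integral>\<^sup>+s. indicator {0<..<1} s * ennreal ((1 - s) ^ CARD('n)) * emeasure lborel J \<partial>lborel)"
  proof (rule nn_integral_cong_AE)
    show "AE s in lborel. emeasure lborel ((\<lambda>x. (x, s)) -` Eset j) = indicator {0<..<1} s * ennreal ((1 - s) ^ CARD('n)) * emeasure lborel J"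
      using AE_lborel_singleton[of 1] AE_lborel_singleton[of 0]
    proof eventually_elim
      case (elim s)
      show ?case
      proof (cases "0 < s \<and> s < 1")
        case True
        then have "(\<lambda>x. (x, s)) -` Eset j = {x \<in> J. s \<le> lam j x}" by (auto simp: Eset_def)
        also have "\<dots> = (\<lambda>u. s *\<^sub>R v j + (1 - s) *\<^sub>R u) ` J" using True by (intro homothety) auto
        finally have "emeasure lborel ((\<lambda>x. (x, s)) -` Eset j) = ennreal (\<bar>1 - s\<bar> ^ DIM(real^'n)) * emeasure lborel J"
          using True by (simp add: emeasure_affine_image J_borel)
        then show ?thesis using True by simp
      next
        case False
        then have "s < 0 \<or> 1 < s" using elim by auto
        then have "(\<lambda>x. (x, s)) -` Eset j = {}"
          using lam_bounds(2)[of _ j] by (fastforce simp: Eset_def)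
        then show ?thesis using False by (simp add: indicator_def)
      qed
    qed
  qed
  also have "\<dots> = (\<integral>\<^sup>+s. indicator {0<..<1} s * ennreal ((1 - s) ^ CARD('n)) \<partial>lborel) * emeasure lborel J"
    by (rule nn_integral_multc) auto
  also have "\<dots> = ennreal (1 / (real CARD('n) + 1)) * emeasure lborel J"
    by (simp only: nn_integral_power01')
  finally show ?thesis .
qed

lemma lam_has_integral:
  "(lam j has_integral (\<bar>det V\<bar> / fact CARD('n) / (real CARD('n) + 1))) J"
proof -
  let ?r = "\<bar>det V\<bar> / fact CARD('n) / (real CARD('n) + 1)"
  have "(\<integral>\<^sup>+x. ennreal (lam j x * indicator J x) \<partial>lborel) = (\<integral>\<^sup>+x. ennreal (lam j x) * indicator J x \<partial>lborel)"
    by (intro nn_integral_cong) (auto simp: indicator_def)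
  also have "\<dots> = ennreal ?r"
    unfolding lam_nn_integral emeasure_J by (simp add: ennreal_mult'[symmetric] del: ennreal_plus)
  finally have I: "(\<integral>\<^sup>+x. ennreal (lam j x * indicator J x) \<partial>lborel) = ennreal ?r" .
  have meas: "(\<lambda>x. lam j x * indicator J x) \<in> borel_measurable borel"
    using J_borel by (intro borel_measurable_times borel_measurable_continuous_onI lam_cont borel_measurable_indicator') auto
  have "((\<lambda>x. lam j x * indicator J x) has_integral ?r) UNIV"
    by (rule nn_integral_has_integral[OF meas _ I]) (auto simp: indicator_def lam_bounds)
  then have "((\<lambda>x. if x \<in> J then lam j x else 0) has_integral ?r) UNIV"
    by (rule has_integral_eq[rotated]) (simp add: indicator_def)
  then show ?thesis by (simp add: has_integral_restrict_UNIV)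
qed

end


context simplex_setup
begin

definition Dset :: "(real^'n \<Rightarrow> real) \<Rightarrow> ((real^'n) \<times> real \<times> real) set" where
  "Dset f = {(x, y, z). 0 < z \<and> z \<le> 1 \<and> (1/z) *\<^sub>R x \<in> J \<and>
      z * f ((1/z) *\<^sub>R x) \<le> y \<and> y \<le> z * affine_interp v f ((1/z) *\<^sub>R x)}"

lemma persp_eq: "persp_relax v f = closure (Dset f)"
proof -
  have "x \<in> (\<lambda>p. z *\<^sub>R p) ` J \<longleftrightarrow> (1/z) *\<^sub>R x \<in> J" if "0 < z" for x :: "real^'n" and z :: real
  proof
    assume "x \<in> (\<lambda>p. z *\<^sub>R p) ` J" then show "(1/z) *\<^sub>R x \<in> J" using that by auto
  next
    assume "(1/z) *\<^sub>R x \<in> J"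
    moreover have "x = z *\<^sub>R ((1/z) *\<^sub>R x)" using that by simp
    ultimately show "x \<in> (\<lambda>p. z *\<^sub>R p) ` J" by blast
  qed
  then have "{(x, y, z). 0 < z \<and> z \<le> 1 \<and> x \<in> (\<lambda>p. z *\<^sub>R p) ` J \<and>
      z * f ((1 / z) *\<^sub>R x) \<le> y \<and> y \<le> z * affine_interp v f ((1 / z) *\<^sub>R x)} = Dset f"
    unfolding Dset_def by auto
  then show ?thesis unfolding persp_relax_def by simp
qed

lemma closure_Dset:
  assumes cont: "continuous_on J f"
  shows "closure (Dset f) \<subseteq> Dset f \<union> {p. snd (snd p) = 0}"
proof (rule closure_minimal)
  show "Dset f \<subseteq> Dset f \<union> {p. snd (snd p) = 0}" by blast
  let ?mu = "affine_interp v f"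
  have cmu: "continuous_on J ?mu" by (rule affine_interp_continuous)
  show "closed (Dset f \<union> {p. snd (snd p) = 0})"
    unfolding closed_sequential_limits
  proof (intro allI impI, elim conjE)
    fix s :: "nat \<Rightarrow> (real^'n) \<times> real \<times> real" and l
    assume s: "\<forall>n. s n \<in> Dset f \<union> {p. snd (snd p) = 0}" and lim: "s \<longlonglongrightarrow> l"
    obtain x y z where l: "l = (x, y, z)" by (cases l) auto
    define xs where "xs n = fst (s n)" for n
    define ys where "ys n = fst (snd (s n))" for n
    define zs where "zs n = snd (snd (s n))" for n
    have sn: "s n = (xs n, ys n, zs n)" for n by (simp add: xs_def ys_def zs_def)
    have xl: "xs \<longlonglongrightarrow> x" unfolding xs_def using tendsto_fst[OF lim] l by simp
    have yl: "ys \<longlonglongrightarrow> y" unfolding ys_def using tendsto_fst[OF tendsto_snd[OF lim]] l by simp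
    have zl: "zs \<longlonglongrightarrow> z" unfolding zs_def using tendsto_snd[OF tendsto_snd[OF lim]] l by simp
    have z0: "0 \<le> zs n" for n using s[rule_format, of n] by (auto simp: sn Dset_def)
    have "0 \<le> z" by (rule LIMSEQ_le_const[OF zl]) (use z0 in auto)
    show "l \<in> Dset f \<union> {p. snd (snd p) = 0}"
    proof (cases "z = 0")
      case True then show ?thesis by (simp add: l)
    next
      case False
      with \<open>0 \<le> z\<close> have zp: "0 < z" by simp
      have evz: "eventually (\<lambda>n. 0 < zs n) sequentially" using order_tendstoD(1)[OF zl zp] .
      have evD: "eventually (\<lambda>n. s n \<in> Dset f) sequentially"
        using evz by eventually_elim (use s in \<open>auto simp: sn\<close>)
      define us where "us n = (1 / zs n) *\<^sub>R xs n" for n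
      have ul: "us \<longlonglongrightarrow> (1/z) *\<^sub>R x" unfolding us_def
        by (intro tendsto_intros xl zl) (use zp in simp)
      have evJ: "eventually (\<lambda>n. us n \<in> J) sequentially"
        using evD by eventually_elim (auto simp: sn Dset_def us_def)
      have uJ: "(1/z) *\<^sub>R x \<in> J"
        by (rule Lim_in_closed_set[OF compact_imp_closed[OF compact_J] evJ _ ul]) simp
      have fl: "(\<lambda>n. f (us n)) \<longlonglongrightarrow> f ((1/z) *\<^sub>R x)"
        by (rule continuous_on_tendsto_compose[OF cont ul uJ evJ])
      have ml: "(\<lambda>n. ?mu (us n)) \<longlonglongrightarrow> ?mu ((1/z) *\<^sub>R x)"
        by (rule continuous_on_tendsto_compose[OF cmu ul uJ evJ])
      have "z * f ((1/z) *\<^sub>R x) \<le> y"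
      proof (rule tendsto_le[OF _ yl])
        show "(\<lambda>n. zs n * f (us n)) \<longlonglongrightarrow> z * f ((1/z) *\<^sub>R x)" by (intro tendsto_intros zl fl)
        show "eventually (\<lambda>n. zs n * f (us n) \<le> ys n) sequentially"
          using evD by eventually_elim (auto simp: sn Dset_def us_def)
      qed simp
      moreover have "y \<le> z * ?mu ((1/z) *\<^sub>R x)"
      proof (rule tendsto_le[OF _ _ yl])
        show "(\<lambda>n. zs n * ?mu (us n)) \<longlonglongrightarrow> z * ?mu ((1/z) *\<^sub>R x)" by (intro tendsto_intros zl ml)
        show "eventually (\<lambda>n. ys n \<le> zs n * ?mu (us n)) sequentially"
          using evD by eventually_elim (auto simp: sn Dset_def us_def)
      qed simp
      moreover have "z \<le> 1"
      proof (rule LIMSEQ_le_const2[OF zl])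
        show "\<exists>N. \<forall>n\<ge>N. zs n \<le> 1" using evD unfolding eventually_sequentially
          by (auto simp: sn Dset_def)
      qed
      ultimately show ?thesis using zp uJ by (simp add: l Dset_def)
    qed
  qed
qed

end


context simplex_setup
begin

lemma integrable_cont_J:
  fixes g :: "real^'n \<Rightarrow> real"
  assumes "continuous_on J g"
  shows "g integrable_on J"
proof -
  have "compact (g ` J)" by (intro compact_continuous_image assms compact_J)
  then obtain B where B: "B > 0" "\<forall>y\<in>g ` J. norm y \<le> B" using compact_imp_bounded bounded_pos by metis
  have "g absolutely_integrable_on J"
  proof (rule measurable_bounded_by_integrable_imp_absolutely_integrable)
    show "g \<in> borel_measurable (lebesgue_on J)"
      by (rule continuous_imp_measurable_on_sets_lebesgue[OF assms]) (simp add: J_borel)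
    show "J \<in> sets lebesgue" using J_borel by simp
    show "(\<lambda>x. B) integrable_on J" by (intro integrable_on_const lmeasurable_compact compact_J)
    show "\<And>x. x \<in> J \<Longrightarrow> norm (g x) \<le> B" using B by auto
  qed
  then show ?thesis by (simp add: absolutely_integrable_on_def)
qed

lemma main_emeasure:
  assumes cont: "continuous_on J f" and fle: "\<And>x. x \<in> J \<Longrightarrow> f x \<le> affine_interp v f x"
  shows "emeasure lborel (closure (Dset f)) =
    ennreal (1 / (real CARD('n) + 2)) * ennreal (integral J (affine_interp v f) - integral J f)"
proof -
  let ?mu = "affine_interp v f"
  let ?C = "closure (Dset f)"
  define g where "g u = ennreal (indicator J u * (?mu u - f u))" for u
  have cdiff: "continuous_on J (\<lambda>u. ?mu u - f u)" by (intro continuous_on_diff affine_interp_continuous cont)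
  have gm[measurable]: "g \<in> borel_measurable borel"
  proof -
    have "(\<lambda>u. indicator J u *\<^sub>R (?mu u - f u)) \<in> borel_measurable borel"
      by (rule borel_measurable_continuous_on_indicator[OF J_borel cdiff])
    then show ?thesis unfolding g_def by simp
  qed
  have Cb: "?C \<in> sets borel" by (simp add: borel_closed)
  have sets: "?C \<in> sets (lborel \<Otimes>\<^sub>M lborel)" using Cb by (subst lborel_prod) simp
  have slice_eq: "{y. (x, y, z) \<in> ?C} = {y. (x, y, z) \<in> Dset f}" if "z \<noteq> 0" for x z
    using closure_Dset[OF cont] closure_subset[of "Dset f"] that by auto
  have "emeasure lborel ?C = emeasure (lborel \<Otimes>\<^sub>M lborel) ?C" by (simp add: lborel_prod)
  also have "\<dots> = (\<integral>\<^sup>+x. emeasure lborel (Pair x -` ?C) \<partial>lborel)"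
    by (rule lborel.emeasure_pair_measure_alt[OF sets])
  also have "\<dots> = (\<integral>\<^sup>+x. \<integral>\<^sup>+z. indicator {0<..1} z * ennreal (z ^ 1) * g ((1/z) *\<^sub>R x) \<partial>lborel \<partial>lborel)"
  proof (rule nn_integral_cong)
    fix x :: "real^'n"
    have sx: "Pair x -` ?C \<in> sets (lborel \<Otimes>\<^sub>M lborel)"
    proof -
      have "(Pair x :: real \<times> real \<Rightarrow> _) \<in> borel_measurable borel"
        by (intro borel_measurable_continuous_onI continuous_intros)
      from measurable_sets[OF this Cb] show ?thesis by (subst lborel_prod) simp
    qed
    have "emeasure lborel (Pair x -` ?C) = emeasure (lborel \<Otimes>\<^sub>M lborel) (Pair x -` ?C)" by (simp add: lborel_prod)
    also have "\<dots> = (\<integral>\<^sup>+z. emeasure lborel ((\<lambda>y. (y, z)) -` Pair x -` ?C) \<partial>lborel)"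
      by (rule lborel_pair.emeasure_pair_measure_alt2[OF sx])
    also have "\<dots> = (\<integral>\<^sup>+z. indicator {0<..1} z * ennreal (z ^ 1) * g ((1/z) *\<^sub>R x) \<partial>lborel)"
    proof (rule nn_integral_cong_AE)
      show "AE z in lborel. emeasure lborel ((\<lambda>y. (y, z)) -` Pair x -` ?C) = indicator {0<..1} z * ennreal (z ^ 1) * g ((1/z) *\<^sub>R x)"
        using AE_lborel_singleton[of 0]
      proof eventually_elim
        case (elim z)
        have "(\<lambda>y. (y, z)) -` Pair x -` ?C = {y. (x, y, z) \<in> ?C}" by auto
        also have "\<dots> = {y. (x, y, z) \<in> Dset f}" using slice_eq[OF elim] .
        finally have eq: "(\<lambda>y. (y, z)) -` Pair x -` ?C = {y. (x, y, z) \<in> Dset f}" .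
        show ?case
        proof (cases "0 < z \<and> z \<le> 1 \<and> (1/z) *\<^sub>R x \<in> J")
          case True
          then have "{y. (x, y, z) \<in> Dset f} = {z * f ((1/z) *\<^sub>R x) .. z * ?mu ((1/z) *\<^sub>R x)}"
            by (auto simp: Dset_def)
          moreover have "z * f ((1/z) *\<^sub>R x) \<le> z * ?mu ((1/z) *\<^sub>R x)"
            using True fle by (intro mult_left_mono) auto
          ultimately show ?thesis using True
            by (simp add: eq g_def right_diff_distrib ennreal_mult'[symmetric])
        next
          case False
          then have "{y. (x, y, z) \<in> Dset f} = {}" by (auto simp: Dset_def)
          then show ?thesis using False by (auto simp: eq g_def indicator_def)
        qed
      qed
    qed
    finally show "emeasure lborel (Pair x -` ?C) = (\<integral>\<^sup>+z. indicator {0<..1} z * ennreal (z ^ 1) * g ((1/z) *\<^sub>R x) \<partial>lborel)" .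
  qed
  also have "\<dots> = (\<integral>\<^sup>+z. \<integral>\<^sup>+x. indicator {0<..1} z * ennreal (z ^ 1) * g ((1/z) *\<^sub>R x) \<partial>lborel \<partial>lborel)"
  proof (rule lborel_pair.Fubini'[symmetric])
    show "case_prod (\<lambda>x z. indicator {0<..1} z * ennreal (z ^ 1) * g ((1/z) *\<^sub>R x)) \<in> borel_measurable (lborel \<Otimes>\<^sub>M lborel)"
    proof -
      have ms[measurable]: "(\<lambda>p::(real^'n)\<times>real. snd p) \<in> borel_measurable borel"
        by (intro borel_measurable_continuous_onI continuous_intros)
      have mf: "(\<lambda>p::(real^'n)\<times>real. fst p) \<in> borel_measurable borel"
        by (intro borel_measurable_continuous_onI continuous_intros)
      have m1: "(\<lambda>p::(real^'n)\<times>real. (1 / snd p) *\<^sub>R fst p) \<in> borel_measurable borel"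
        by (intro borel_measurable_scaleR borel_measurable_divide borel_measurable_const ms mf)
      have m2[measurable]: "(\<lambda>p::(real^'n)\<times>real. g ((1 / snd p) *\<^sub>R fst p)) \<in> borel_measurable borel"
        using measurable_compose[OF m1 gm] by (simp add: o_def)
      show ?thesis unfolding lborel_prod measurable_lborel2 split_beta' by measurable
    qed
  qed
  also have "\<dots> = ennreal (1 / (real (DIM(real^'n) + 1) + 1)) * (\<integral>\<^sup>+u. g u \<partial>lborel)"
    by (rule cone_integral[OF gm])
  also have "(\<integral>\<^sup>+u. g u \<partial>lborel) = ennreal (integral J ?mu - integral J f)"
  proof -
    have "(\<integral>\<^sup>+u. g u \<partial>lborel) = (\<integral>\<^sup>+u. ennreal (?mu u - f u) * indicator J u \<partial>lborel)"
      by (intro nn_integral_cong) (auto simp: g_def indicator_def)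
    also have "\<dots> = ennreal (integral J ?mu - integral J f)"
    proof (rule nn_integral_has_integral_lebesgue')
      show "\<And>x. x \<in> J \<Longrightarrow> 0 \<le> ?mu x - f x" using fle by auto
      show "((\<lambda>u. ?mu u - f u) has_integral (integral J ?mu - integral J f)) J"
        by (intro has_integral_diff integrable_integral integrable_cont_J cont affine_interp_continuous)
    qed
    finally show ?thesis .
  qed
  finally show ?thesis by (simp add: add.assoc add.commute)
qed

end


theorem theorem1:
  fixes v :: "'n::finite option \<Rightarrow> real^'n"
    and f :: "real^'n \<Rightarrow> real"
  assumes simplex: "inj v" "\<not> affine_dependent (range v)"
    and orthant: "\<forall>x \<in> convex hull (range v). (\<forall>i. 0 \<le> x $ i) \<and> x \<noteq> 0"
    and cont: "continuous_on (convex hull (range v)) f"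
    and conv: "convex_on (convex hull (range v)) f"
  shows "measure lebesgue (persp_relax v f) =
    1 / fact (CARD('n) + 2) * \<bar>det (vertex_matrix v)\<bar> * (\<Sum>j\<in>UNIV. f (v j))
    - 1 / real (CARD('n) + 2) * integral (convex hull (range v)) f"
proof -
  interpret S: simplex_setup v using simplex by unfold_locales
  let ?J = "convex hull (range v)"
  let ?mu = "affine_interp v f"
  let ?r = "\<bar>det (vertex_matrix v)\<bar> / fact CARD('n) / (real CARD('n) + 1)"
  have rep: "\<exists>a. (\<forall>j. 0 \<le> a j) \<and> sum a UNIV = 1 \<and> x = (\<Sum>j\<in>UNIV. a j *\<^sub>R v j)" if "x \<in> ?J" for x
    using that unfolding S.J_eq by auto
  have fle: "f x \<le> ?mu x" if xJ: "x \<in> ?J" for x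
  proof -
    obtain a where a: "\<forall>j. 0 \<le> a j" "sum a UNIV = 1" "x = (\<Sum>j\<in>UNIV. a j *\<^sub>R v j)" using rep[OF xJ] by blast
    have "f (\<Sum>j\<in>UNIV. a j *\<^sub>R v j) \<le> (\<Sum>j\<in>UNIV. a j * f (v j))"
      by (rule convex_on_sum[OF _ _ conv]) (use a in \<open>auto intro: hull_inc\<close>)
    also have "\<dots> = ?mu (\<Sum>j\<in>UNIV. a j *\<^sub>R v j)" by (rule S.affine_interp_comb[OF a(2), symmetric])
    finally show ?thesis using a(3) by simp
  qed
  have mu_lam: "?mu x = (\<Sum>j\<in>UNIV. f (v j) * S.lam j x)" if xJ: "x \<in> ?J" for x
  proof -
    obtain a where a: "\<forall>j. 0 \<le> a j" "sum a UNIV = 1" "x = (\<Sum>j\<in>UNIV. a j *\<^sub>R v j)" using rep[OF xJ] by blast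
    have "?mu x = (\<Sum>j\<in>UNIV. a j * f (v j))" using S.affine_interp_comb[OF a(2)] a(3) by simp
    also have "\<dots> = (\<Sum>j\<in>UNIV. f (v j) * S.lam j x)" using S.lam_comb[OF a(2)] a(3) by (simp add: mult.commute)
    finally show ?thesis .
  qed
  have Imu: "integral ?J ?mu = (\<Sum>j\<in>UNIV. f (v j)) * ?r"
  proof -
    have "integral ?J ?mu = integral ?J (\<lambda>x. \<Sum>j\<in>UNIV. f (v j) * S.lam j x)"
      by (rule integral_cong) (rule mu_lam)
    also have "\<dots> = (\<Sum>j\<in>UNIV. integral ?J (\<lambda>x. f (v j) * S.lam j x))"
    proof (rule integral_sum)
      show "finite (UNIV :: 'n option set)" by simp
      fix j :: "'n option"
      have "S.lam j integrable_on ?J" by (rule has_integral_integrable[OF S.lam_has_integral])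
      then show "(\<lambda>x. f (v j) * S.lam j x) integrable_on ?J" using integrable_cmul[of "S.lam j" ?J "f (v j)"] by simp
    qed
    also have "\<dots> = (\<Sum>j\<in>UNIV. f (v j) * ?r)"
      by (intro sum.cong refl) (simp add: integral_mult_right integral_unique[OF S.lam_has_integral])
    finally show ?thesis by (simp only: sum_distrib_right[symmetric])
  qed
  have intf: "f integrable_on ?J" by (rule S.integrable_cont_J[OF cont])
  have intmu: "?mu integrable_on ?J" by (rule S.integrable_cont_J[OF S.affine_interp_continuous])
  have nonneg: "0 \<le> integral ?J ?mu - integral ?J f"
    using integral_le[OF intf intmu fle] by simp
  have "measure lebesgue (persp_relax v f) = measure lebesgue (closure (S.Dset f))" by (simp add: S.persp_eq)
  also have "\<dots> = measure lborel (closure (S.Dset f))" by (simp add: borel_closed)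
  also have "\<dots> = enn2real (ennreal (1 / (real CARD('n) + 2)) * ennreal (integral ?J ?mu - integral ?J f))"
    unfolding measure_def using S.main_emeasure[OF cont fle] by simp
  also have "\<dots> = 1 / (real CARD('n) + 2) * (integral ?J ?mu - integral ?J f)"
    using nonneg by (simp add: ennreal_mult'[symmetric] del: ennreal_plus)
  also have "\<dots> = 1 / fact (CARD('n) + 2) * \<bar>det (vertex_matrix v)\<bar> * (\<Sum>j\<in>UNIV. f (v j))
    - 1 / real (CARD('n) + 2) * integral ?J f"
  proof -
    have fe: "(fact (CARD('n) + 2) :: real) = (real CARD('n) + 2) * ((real CARD('n) + 1) * fact CARD('n))"
      by (simp add: fact_Suc numeral_2_eq_2 algebra_simps)
    have "1 / (real CARD('n) + 2) * ((\<Sum>j\<in>UNIV. f (v j)) * ?r) = 1 / fact (CARD('n) + 2) * \<bar>det (vertex_matrix v)\<bar> * (\<Sum>j\<in>UNIV. f (v j))"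
      unfolding fe by (simp add: field_simps)
    then show ?thesis by (simp add: Imu right_diff_distrib add.commute)
  qed
  finally show ?thesis .
qed


end
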